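(* For every $i\in[d]$, all $x$ with $\|x\|_2\le1$ and every time step $t\ge1$, with probability at least $1-\frac1{c_1}-\exp\!\left(-\frac{32(c_4-1)^2\eta^2m^2\bar\Lambda^2t^2}{\pi}\right)$ over the random initialization, for constants $c_1>10$ and $c_4\ge1$, $$\big|\phi(N(x_{1:i};\theta^{(t)}_i))-\phi(P(x_{1:i};\theta^{(t)}_i))\big|\le\big|N(x_{1:i};\theta^{(t)}_i)-P(x_{1:i};\theta^{(t)}_i)\big|\le\frac{192\eta^2m^{1.5}\bar\Lambda^2c_1c_4\epsilon_at^2\sqrt{\log m}}{\sqrt\pi},$$ where $\bar\Lambda=6c_1\epsilon_a\sqrt{2\log m}$.
   Context: UNF setting. Fix $d\ge1$, $m\ge2$, $\epsilon_a>0$, $Q\ge1$, learning rate $\eta>0$. For $\|x_{1:i}\|_2\le1$, $\hat x_{1:i}=(x_1,\dots,x_i,\sqrt{1-\|x_{1:i}\|_2^2})$. $\sigma(u)=\max\{u,0\}$, $\sigma'(u)=\mathbf 1\{u\ge0\}$; $\phi(u)=e^u$ ($u<0$), $u+1$ ($u\ge0$). Frozen random initial parameters $a_{i,r}\sim\mathcal N(0,\epsilon_a^2)$, $\bar w_{i,r}\sim\mathcal N(0,\frac1mI_{i+1})$, $\bar b_{i,r}\sim\mathcal N(0,\frac1m)$, independent. Offsets $\theta_i=(w_{i,r},b_{i,r})_r$. Network $N(x_{1:i};\theta_i)=\sum_ra_{i,r}\sigma(\langle\bar w_{i,r}+w_{i,r},\hat x_{1:i}\rangle+\bar b_{i,r}+b_{i,r})$;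 pseudo-network $P(x_{1:i};\theta_i)=\sum_ra_{i,r}\sigma'(\langle\bar w_{i,r},\hat x_{1:i}\rangle+\bar b_{i,r})(\langle\bar w_{i,r}+w_{i,r},\hat x_{1:i}\rangle+\bar b_{i,r}+b_{i,r})$. Approximate loss $\tilde L(\nabla f,x)=\sum_i\big(\sum_{j=1}^Q\Delta_{x_i}\phi(N(q^{(j)}_i;\theta_i))-\log\phi(N(x_{1:i};\theta_i))\big)$ with $\Delta_{x_i}=(x_i+1)/Q$, $q^{(j)}_i=(x_1,\dots,x_{i-1},-1+j\Delta_{x_i})$. $\theta^{(t)}$ are SGD iterates: $\theta^{(0)}=0$, $\theta^{(t+1)}=\theta^{(t)}-\eta\nabla_\theta\tilde L(\nabla f^{(t)},x^{(t)})$, $x^{(t)}$ uniform from a training set in the unit ball. *)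

theory Defs
  imports "HOL-Probability.Probability"
begin

definition relu :: "real \<Rightarrow> real" where "relu u = max u 0"
definition relu' :: "real \<Rightarrow> real" where "relu' u = (if u \<ge> 0 then 1 else 0)"
definition phi :: "real \<Rightarrow> real" where "phi u = (if u < 0 then exp u else u + 1)"
text \<open>Derivative of phi (it is differentiable everywhere, derivative 1 at 0).\<close>
definition phi' :: "real \<Rightarrow> real" where "phi' u = (if u < 0 then exp u else 1)"

text \<open>Indices of the frozen random initial parameters (1-based: i in 1..d, r in 1..m,
  k in 1..i+1).\<close>
datatype pid = A nat nat | Wb nat nat nat | Bb nat nat

definition init_index :: "nat \<Rightarrow> nat \<Rightarrow> pid set" where
  "init_index d m =
     {A i r | i r. i \<in> {1..d} \<and> r \<in> {1..m}}
   \<union> {Wb i r k | i r k. i \<in> {1..d} \<and> r \<in> {1..m} \<and> k \<in> {1..i+1}}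
   \<union> {Bb i r | i r. i \<in> {1..d} \<and> r \<in> {1..m}}"

text \<open>Standard deviation of each initial parameter: a ~ N(0, eps_a^2),
  wbar ~ N(0, I/m), bbar ~ N(0, 1/m).\<close>
definition init_sd :: "nat \<Rightarrow> real \<Rightarrow> pid \<Rightarrow> real" where
  "init_sd m eps_a j = (case j of A i r \<Rightarrow> eps_a | _ \<Rightarrow> 1 / sqrt (real m))"

definition init_measure :: "nat \<Rightarrow> nat \<Rightarrow> real \<Rightarrow> (pid \<Rightarrow> real) measure" where
  "init_measure d m eps_a =
     PiM (init_index d m) (\<lambda>j. density lborel (normal_density 0 (init_sd m eps_a j)))"

text \<open>Inputs are vectors x :: nat => real with coordinates x 1, ..., x d.
  xhat i x is the (i+1)-vector (x_1,...,x_i, sqrt(1 - ||x_{1:i}||^2)).\<close>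
definition xhat :: "nat \<Rightarrow> (nat \<Rightarrow> real) \<Rightarrow> nat \<Rightarrow> real" where
  "xhat i x k = (if k \<le> i then x k else if k = i + 1 then sqrt (1 - (\<Sum>l=1..i. (x l)\<^sup>2)) else 0)"

text \<open>Offsets theta_i: r |-> (w_{i,r}, b_{i,r}), w_{i,r} indexed by 1..i+1.\<close>
type_synonym offsets = "nat \<Rightarrow> (nat \<Rightarrow> real) \<times> real"

definition preact :: "(pid \<Rightarrow> real) \<Rightarrow> nat \<Rightarrow> offsets \<Rightarrow> nat \<Rightarrow> (nat \<Rightarrow> real) \<Rightarrow> real" where
  "preact \<omega> i th r x =
     (\<Sum>k=1..i+1. (\<omega> (Wb i r k) + fst (th r) k) * xhat i x k) + \<omega> (Bb i r) + snd (th r)"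

definition preact0 :: "(pid \<Rightarrow> real) \<Rightarrow> nat \<Rightarrow> nat \<Rightarrow> (nat \<Rightarrow> real) \<Rightarrow> real" where
  "preact0 \<omega> i r x = (\<Sum>k=1..i+1. \<omega> (Wb i r k) * xhat i x k) + \<omega> (Bb i r)"

definition netN :: "nat \<Rightarrow> (pid \<Rightarrow> real) \<Rightarrow> nat \<Rightarrow> offsets \<Rightarrow> (nat \<Rightarrow> real) \<Rightarrow> real" where
  "netN m \<omega> i th x = (\<Sum>r=1..m. \<omega> (A i r) * relu (preact \<omega> i th r x))"

definition netP :: "nat \<Rightarrow> (pid \<Rightarrow> real) \<Rightarrow> nat \<Rightarrow> offsets \<Rightarrow> (nat \<Rightarrow> real) \<Rightarrow> real" where
  "netP m \<omega> i th x = (\<Sum>r=1..m. \<omega> (A i r) * relu' (preact0 \<omega> i r x) * preact \<omega> i th r x)"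

text \<open>Quadrature points q_i^{(j)} = (x_1,...,x_{i-1}, -1 + j * Delta_{x_i}), Delta = (x_i+1)/Q.\<close>
definition qpt :: "nat \<Rightarrow> nat \<Rightarrow> (nat \<Rightarrow> real) \<Rightarrow> nat \<Rightarrow> nat \<Rightarrow> real" where
  "qpt Q i x j = x(i := -1 + real j * ((x i + 1) / real Q))"

text \<open>Gradient of the approximate loss tilde L with respect to (w_{i,r}, b_{i,r}),
  with the convention sigma'(u) = 1{u >= 0} for the ReLU derivative.
  Only the i-th summand of tilde L depends on theta_i.\<close>
definition grad_w :: "nat \<Rightarrow> nat \<Rightarrow> (pid \<Rightarrow> real) \<Rightarrow> nat \<Rightarrow> offsets \<Rightarrow> (nat \<Rightarrow> real) \<Rightarrow> nat \<Rightarrow> nat \<Rightarrow> real" where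
  "grad_w m Q \<omega> i th x r k =
     (\<Sum>j=1..Q. ((x i + 1) / real Q) * phi' (netN m \<omega> i th (qpt Q i x j))
                 * \<omega> (A i r) * relu' (preact \<omega> i th r (qpt Q i x j)) * xhat i (qpt Q i x j) k)
     - (phi' (netN m \<omega> i th x) / phi (netN m \<omega> i th x))
                 * \<omega> (A i r) * relu' (preact \<omega> i th r x) * xhat i x k"

definition grad_b :: "nat \<Rightarrow> nat \<Rightarrow> (pid \<Rightarrow> real) \<Rightarrow> nat \<Rightarrow> offsets \<Rightarrow> (nat \<Rightarrow> real) \<Rightarrow> nat \<Rightarrow> real" where
  "grad_b m Q \<omega> i th x r =
     (\<Sum>j=1..Q. ((x i + 1) / real Q) * phi' (netN m \<omega> i th (qpt Q i x j))
                 * \<omega> (A i r) * relu' (preact \<omega> i th r (qpt Q i x j)))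
     - (phi' (netN m \<omega> i th x) / phi (netN m \<omega> i th x))
                 * \<omega> (A i r) * relu' (preact \<omega> i th r x)"

primrec sgd :: "nat \<Rightarrow> nat \<Rightarrow> real \<Rightarrow> (pid \<Rightarrow> real) \<Rightarrow> nat \<Rightarrow> (nat \<Rightarrow> nat \<Rightarrow> real) \<Rightarrow> nat \<Rightarrow> offsets" where
  "sgd m Q \<eta> \<omega> i xs 0 = (\<lambda>r. (\<lambda>k. 0, 0))"
| "sgd m Q \<eta> \<omega> i xs (Suc t) =
     (\<lambda>r. (\<lambda>k. fst (sgd m Q \<eta> \<omega> i xs t r) k - \<eta> * grad_w m Q \<omega> i (sgd m Q \<eta> \<omega> i xs t) (xs t) r k,
           snd (sgd m Q \<eta> \<omega> i xs t r) - \<eta> * grad_b m Q \<omega> i (sgd m Q \<eta> \<omega> i xs t) (xs t) r))"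

end

theory Submission
  imports Defs
begin




definition ndm :: "nat \<Rightarrow> real \<Rightarrow> pid \<Rightarrow> real measure" where
  "ndm m eps_a j = density lborel (normal_density 0 (init_sd m eps_a j))"

lemma init_measure_ndm: "init_measure d m eps_a = PiM (init_index d m) (ndm m eps_a)"
  unfolding init_measure_def ndm_def by simp

lemma init_sd_pos: "m \<ge> 1 \<Longrightarrow> eps_a > 0 \<Longrightarrow> init_sd m eps_a j > 0"
  by (auto simp: init_sd_def split: pid.split)

lemma sets_ndm[simp, measurable_cong]: "sets (ndm m eps_a j) = sets borel"
  by (simp add: ndm_def)

lemma space_ndm[simp]: "space (ndm m eps_a j) = UNIV"
  by (simp add: ndm_def)

lemma prob_ndm: "m \<ge> 1 \<Longrightarrow> eps_a > 0 \<Longrightarrow> prob_space (ndm m eps_a j)"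
  unfolding ndm_def by (rule prob_space_normal_density) (rule init_sd_pos)

lemma pps_ndm: "m \<ge> 1 \<Longrightarrow> eps_a > 0 \<Longrightarrow> product_prob_space (ndm m eps_a)"
  unfolding product_prob_space_def product_prob_space_axioms_def product_sigma_finite_def
  using prob_ndm prob_space_imp_sigma_finite by blast

lemma finite_init_index: "finite (init_index d m)"
proof -
  have 1: "{A i r | i r. i \<in> {1..d} \<and> r \<in> {1..m}} \<subseteq> (\<lambda>(i,r). A i r) ` ({1..d}\<times>{1..m})"
    by force
  have 2: "{Wb i r k | i r k. i \<in> {1..d} \<and> r \<in> {1..m} \<and> k \<in> {1..i+1}}
     \<subseteq> (\<lambda>(i,r,k). Wb i r k) ` ({1..d}\<times>{1..m}\<times>{1..d+1})"
  proof
    fix z assume "z \<in> {Wb i r k | i r k. i \<in> {1..d} \<and> r \<in> {1..m} \<and> k \<in> {1..i+1}}"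
    then obtain i r k where "z = Wb i r k" "i \<in> {1..d}" "r \<in> {1..m}" "k \<in> {1..i+1}" by blast
    then show "z \<in> (\<lambda>(i,r,k). Wb i r k) ` ({1..d}\<times>{1..m}\<times>{1..d+1})"
      by (intro image_eqI[of _ _ "(i,r,k)"]) auto
  qed
  have 3: "{Bb i r | i r. i \<in> {1..d} \<and> r \<in> {1..m}} \<subseteq> (\<lambda>(i,r). Bb i r) ` ({1..d}\<times>{1..m})"
    by force
  show ?thesis unfolding init_index_def
    using finite_subset[OF 1] finite_subset[OF 2] finite_subset[OF 3] by blast
qed

lemma ps_init: "m \<ge> 1 \<Longrightarrow> eps_a > 0 \<Longrightarrow> prob_space (init_measure d m eps_a)"
  unfolding init_measure_ndm by (rule prob_space_PiM) (rule prob_ndm)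

lemma comp_meas[measurable]: "(\<lambda>\<omega>. \<omega> j) \<in> borel_measurable (init_measure d m eps_a)"
proof (cases "j \<in> init_index d m")
  case True
  have "(\<lambda>\<omega>. \<omega> j) \<in> measurable (PiM (init_index d m) (ndm m eps_a)) (ndm m eps_a j)"
    using measurable_component_singleton[OF True, of "ndm m eps_a"] .
  moreover have "measurable (PiM (init_index d m) (ndm m eps_a)) (ndm m eps_a j) = measurable (PiM (init_index d m) (ndm m eps_a)) borel"
    by (rule measurable_cong_sets) simp_all
  ultimately show ?thesis unfolding init_measure_ndm by simp
next
  case False
  have "(\<lambda>\<omega>. undefined) \<in> borel_measurable (init_measure d m eps_a)" by simp
  then show ?thesis
    by (rule measurable_cong[THEN iffD1, rotated])
       (use False in \<open>auto simp: init_measure_ndm space_PiM PiE_def extensional_def\<close>)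
qed

lemma comp_dist:
  assumes "m \<ge> 1" "eps_a > 0" "j \<in> init_index d m"
  shows "distributed (init_measure d m eps_a) lborel (\<lambda>\<omega>. \<omega> j) (normal_density 0 (init_sd m eps_a j))"
proof -
  interpret product_prob_space "ndm m eps_a" "init_index d m" using pps_ndm assms by blast
  have "distr (init_measure d m eps_a) lborel (\<lambda>\<omega>. \<omega> j) = distr (PiM (init_index d m) (ndm m eps_a)) (ndm m eps_a j) (\<lambda>\<omega>. \<omega> j)"
    by (rule distr_cong) (simp_all add: init_measure_ndm)
  also have "\<dots> = ndm m eps_a j" using PiM_component assms by blast
  finally have "distr (init_measure d m eps_a) lborel (\<lambda>\<omega>. \<omega> j) = density lborel (normal_density 0 (init_sd m eps_a j))"
    unfolding ndm_def .
  moreover have "(\<lambda>\<omega>. \<omega> j) \<in> measurable (init_measure d m eps_a) lborel"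
    using comp_meas[of j d m eps_a] by (simp add: measurable_lborel1)
  ultimately show ?thesis unfolding distributed_def by simp
qed

lemma indep_coords:
  assumes "m \<ge> 1" "eps_a > 0"
  shows "prob_space.indep_vars (init_measure d m eps_a) (\<lambda>_. borel) (\<lambda>j \<omega>. \<omega> j) (init_index d m)"
proof -
  interpret Q0: prob_space "init_measure d m eps_a" using ps_init assms by blast
  interpret product_prob_space "ndm m eps_a" "init_index d m" using pps_ndm assms by blast
  show ?thesis
  proof (cases "init_index d m = {}")
    case True then show ?thesis by (simp add: Q0.indep_vars_def Q0.indep_sets_def)
  next
    case False
    have "Q0.indep_vars (\<lambda>_. borel) (\<lambda>j \<omega>. \<omega> j) (init_index d m) \<longleftrightarrow>
      distr (init_measure d m eps_a) (\<Pi>\<^sub>M i\<in>init_index d m. borel) (\<lambda>x. \<lambda>i\<in>init_index d m. x i)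
       = (\<Pi>\<^sub>M i\<in>init_index d m. distr (init_measure d m eps_a) borel (\<lambda>\<omega>. \<omega> i))" (is "_ \<longleftrightarrow> ?L = ?R")
      by (rule Q0.indep_vars_iff_distr_eq_PiM'[OF False]) simp
    moreover have "?L = init_measure d m eps_a"
    proof -
      have "distr (init_measure d m eps_a) (\<Pi>\<^sub>M i\<in>init_index d m. borel) (\<lambda>x. \<lambda>i\<in>init_index d m. x i)
        = distr (init_measure d m eps_a) (init_measure d m eps_a) (\<lambda>x. x)"
      proof -
        have s1: "sets (Pi\<^sub>M (init_index d m) (\<lambda>i. borel)) = sets (init_measure d m eps_a)"
          unfolding init_measure_ndm by (rule sets_PiM_cong) simp_all
        have s2: "restrict x (init_index d m) = x" if "x \<in> space (init_measure d m eps_a)" for x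
          using that unfolding init_measure_ndm space_PiM PiE_def by (simp add: extensional_restrict)
        show ?thesis by (rule distr_cong[OF refl s1 s2])
      qed
      then show ?thesis by simp
    qed
    moreover have "?R = init_measure d m eps_a"
      unfolding init_measure_ndm
    proof (rule PiM_cong[OF refl])
      fix i assume "i \<in> init_index d m"
      then have "distr (PiM (init_index d m) (ndm m eps_a)) (ndm m eps_a i) (\<lambda>\<omega>. \<omega> i) = ndm m eps_a i"
        using PiM_component by blast
      moreover have "distr (PiM (init_index d m) (ndm m eps_a)) borel (\<lambda>\<omega>. \<omega> i)
          = distr (PiM (init_index d m) (ndm m eps_a)) (ndm m eps_a i) (\<lambda>\<omega>. \<omega> i)"
        by (rule distr_cong) simp_all
      ultimately show "distr (PiM (init_index d m) (ndm m eps_a)) borel (\<lambda>\<omega>. \<omega> i) = ndm m eps_a i" by simp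
    qed
    ultimately show ?thesis by (simp only:)
  qed
qed




lemma nd_le: "\<sigma> > 0 \<Longrightarrow> normal_density \<mu> \<sigma> x \<le> 1 / (\<sigma> * sqrt (2 * pi))"
proof -
  assume s: "\<sigma> > 0"
  have "sqrt (2 * pi * \<sigma>\<^sup>2) = \<sigma> * sqrt (2 * pi)"
    using s by (simp add: real_sqrt_mult mult.commute)
  moreover have "exp (-(x - \<mu>)\<^sup>2/ (2 * \<sigma>\<^sup>2)) \<le> 1" by simp
  ultimately show ?thesis unfolding normal_density_def using s
    by (simp add: divide_right_mono)
qed

lemma nn_integral_nd: "\<sigma> > 0 \<Longrightarrow> (\<integral>\<^sup>+x. ennreal (normal_density \<mu> \<sigma> x) \<partial>lborel) = 1"
  by (subst nn_integral_eq_integral) auto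

lemma (in prob_space) normal_small_ball:
  assumes X: "distributed M lborel X (normal_density \<mu> \<sigma>)" and s: "\<sigma> > 0" and e: "\<epsilon> \<ge> 0"
  shows "measure M {\<omega>\<in>space M. \<bar>X \<omega>\<bar> \<le> \<epsilon>} \<le> 2 * \<epsilon> / (\<sigma> * sqrt (2 * pi))"
proof -
  have eq: "{\<omega>\<in>space M. \<bar>X \<omega>\<bar> \<le> \<epsilon>} = X -` {-\<epsilon>..\<epsilon>} \<inter> space M" by auto
  have "emeasure M (X -` {-\<epsilon>..\<epsilon>} \<inter> space M) = (\<integral>\<^sup>+x. ennreal (normal_density \<mu> \<sigma> x) * indicator {-\<epsilon>..\<epsilon>} x \<partial>lborel)"
    by (rule distributed_emeasure[OF X]) simp
  also have "\<dots> \<le> (\<integral>\<^sup>+x. ennreal (1 / (\<sigma> * sqrt (2 * pi))) * indicator {-\<epsilon>..\<epsilon>} x \<partial>lborel)"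
    by (intro nn_integral_mono) (auto intro!: ennreal_leI nd_le s split: split_indicator)
  also have "\<dots> = ennreal (1 / (\<sigma> * sqrt (2 * pi))) * (2 * \<epsilon>)"
    using e by (simp add: nn_integral_cmult)
  also have "\<dots> = ennreal (2 * \<epsilon> / (\<sigma> * sqrt (2 * pi)))"
    using e s by (simp add: ennreal_mult'[symmetric])
  finally have "emeasure M {\<omega>\<in>space M. \<bar>X \<omega>\<bar> \<le> \<epsilon>} \<le> ennreal (2 * \<epsilon> / (\<sigma> * sqrt (2 * pi)))"
    unfolding eq .
  then show ?thesis
    using e s by (simp add: emeasure_eq_measure)
qed

lemma (in prob_space) normal_tail:
  assumes X: "distributed M lborel X (normal_density 0 \<sigma>)" and s: "\<sigma> > 0" and L0: "L \<ge> 0"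
  shows "measure M {\<omega>\<in>space M. \<bar>X \<omega>\<bar> > L} \<le> sqrt 2 * exp (- L\<^sup>2 / (4 * \<sigma>\<^sup>2))"
proof -
  have eq: "{\<omega>\<in>space M. \<bar>X \<omega>\<bar> > L} = X -` {x. \<bar>x\<bar> > L} \<inter> space M" by auto
  have pt: "normal_density 0 \<sigma> x * indicator {x. \<bar>x\<bar> > L} x
      \<le> sqrt 2 * exp (- L\<^sup>2 / (4 * \<sigma>\<^sup>2)) * normal_density 0 (sqrt 2 * \<sigma>) x" for x
  proof (cases "\<bar>x\<bar> > L")
    case True
    have s2: "sqrt (2 * pi * (sqrt 2 * \<sigma>)\<^sup>2) = sqrt 2 * sqrt (2 * pi * \<sigma>\<^sup>2)"
      by (simp add: power_mult_distrib real_sqrt_mult)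
    have "exp (- x\<^sup>2 / (2 * \<sigma>\<^sup>2)) = exp (- x\<^sup>2 / (4 * \<sigma>\<^sup>2)) * exp (- x\<^sup>2 / (4 * \<sigma>\<^sup>2))"
      by (simp add: exp_add[symmetric] field_simps)
    also have "\<dots> \<le> exp (- L\<^sup>2 / (4 * \<sigma>\<^sup>2)) * exp (- x\<^sup>2 / (4 * \<sigma>\<^sup>2))"
    proof (rule mult_right_mono)
      show "exp (- x\<^sup>2 / (4 * \<sigma>\<^sup>2)) \<le> exp (- L\<^sup>2 / (4 * \<sigma>\<^sup>2))"
      proof -
        have "L\<^sup>2 \<le> x\<^sup>2" using \<open>\<bar>x\<bar> > L\<close> L0
          by (metis abs_le_square_iff abs_of_nonneg less_imp_le)
        then show ?thesis using s by (simp add: divide_right_mono)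
      qed
    qed simp
    finally have "exp (- x\<^sup>2 / (2 * \<sigma>\<^sup>2)) \<le> exp (- L\<^sup>2 / (4 * \<sigma>\<^sup>2)) * exp (- x\<^sup>2 / (4 * \<sigma>\<^sup>2))" .
    then show ?thesis using True s
      unfolding normal_density_def s2
      by (simp add: field_simps power_mult_distrib)
  qed simp
  have "emeasure M (X -` {x. \<bar>x\<bar> > L} \<inter> space M) = (\<integral>\<^sup>+x. ennreal (normal_density 0 \<sigma> x) * indicator {x. \<bar>x\<bar> > L} x \<partial>lborel)"
    by (rule distributed_emeasure[OF X]) simp
  also have "\<dots> \<le> (\<integral>\<^sup>+x. ennreal (sqrt 2 * exp (- L\<^sup>2 / (4 * \<sigma>\<^sup>2))) * ennreal (normal_density 0 (sqrt 2 * \<sigma>) x) \<partial>lborel)"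
    using pt by (intro nn_integral_mono) (auto simp: ennreal_mult'[symmetric] ennreal_indicator[symmetric] ennreal_leI)
  also have "\<dots> = ennreal (sqrt 2 * exp (- L\<^sup>2 / (4 * \<sigma>\<^sup>2)))"
    using s by (simp add: nn_integral_cmult nn_integral_nd)
  finally have "emeasure M {\<omega>\<in>space M. \<bar>X \<omega>\<bar> > L} \<le> ennreal (sqrt 2 * exp (- L\<^sup>2 / (4 * \<sigma>\<^sup>2)))"
    unfolding eq .
  then show ?thesis
    by (simp add: emeasure_eq_measure)
qed




lemma phi_pos: "phi u > 0"
  unfolding phi_def by auto

lemma phi'_nonneg: "phi' u \<ge> 0" and phi'_le1: "phi' u \<le> 1"
  unfolding phi'_def by auto

lemma phi_ratio: "0 \<le> phi' u / phi u" "phi' u / phi u \<le> 1"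
  unfolding phi'_def phi_def by auto

lemma exp_lip_neg:
  fixes u v :: real assumes "v \<le> u" "u \<le> 0"
  shows "exp u - exp v \<le> u - v"
proof -
  have "exp u - exp v = exp u * (1 - exp (v - u))" by (simp add: exp_diff field_simps)
  also have "\<dots> \<le> 1 * (1 - exp (v - u))"
    using assms by (intro mult_right_mono) auto
  also have "\<dots> = 1 - exp (v - u)" by simp
  also have "\<dots> \<le> u - v" using exp_ge_add_one_self[of "v - u"] by linarith
  finally show ?thesis .
qed

lemma phi_lip: "\<bar>phi u - phi v\<bar> \<le> \<bar>u - v\<bar>"
proof -
  have *: "\<bar>phi u - phi v\<bar> \<le> \<bar>u - v\<bar>" if "v \<le> u" for u v
  proof -
    have "phi v \<le> phi u"
    proof (cases "v < 0")
      case True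
      have e: "exp v \<le> 1" using True by simp
      have pv: "phi v = exp v" using True by (simp add: phi_def)
      show ?thesis
      proof (cases "u < 0")
        case True then show ?thesis using that pv by (simp add: phi_def)
      next
        case False then have "phi u = u + 1" by (simp add: phi_def)
        then show ?thesis using pv e False by linarith
      qed
    next
      case False then show ?thesis using that unfolding phi_def by auto
    qed
    moreover have "phi u - phi v \<le> u - v"
    proof (cases "u < 0")
      case True then show ?thesis using that exp_lip_neg[of v u] unfolding phi_def by auto
    next
      case False
      then have pu: "phi u = u + 1" by (simp add: phi_def)
      have "phi v \<ge> 1 + v"
        using exp_ge_add_one_self[of v] by (simp add: phi_def)
      then show ?thesis using pu by linarith
    qed
    ultimately show ?thesis by simp
  qed
  show ?thesis using *[of u v] *[of v u] by (cases "v \<le> u") (auto simp: abs_minus_commute)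
qed

lemma relu_err: "\<bar>relu (z + D) - relu' z * (z + D)\<bar> \<le> \<bar>D\<bar> * (if \<bar>z\<bar> \<le> \<bar>D\<bar> then 1 else 0)"
  unfolding relu_def relu'_def by auto

lemma sqrt_sq_abs: "(sqrt z)\<^sup>2 = \<bar>z\<bar>"
proof (cases "z \<ge> 0")
  case False
  have "sqrt z = - sqrt (- z)" using real_sqrt_minus[of "-z"] by simp
  then have "(sqrt z)\<^sup>2 = (sqrt (- z))\<^sup>2" by simp
  also have "\<dots> = - z" using False by simp
  finally show ?thesis using False by simp
qed simp

lemma sum_sq_mono:
  fixes v :: "nat \<Rightarrow> real"
  assumes "i \<le> d" shows "(\<Sum>l=1..i. (v l)\<^sup>2) \<le> (\<Sum>l=1..d. (v l)\<^sup>2)"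
  by (rule sum_mono2) (use assms in auto)

lemma xhat_sq_sum: "(\<Sum>k=1..i+1. (xhat i v k)\<^sup>2) = (\<Sum>l=1..i. (v l)\<^sup>2) + \<bar>1 - (\<Sum>l=1..i. (v l)\<^sup>2)\<bar>"
proof -
  have "(\<Sum>k=1..i+1. (xhat i v k)\<^sup>2) = (\<Sum>k=1..i. (xhat i v k)\<^sup>2) + (xhat i v (i+1))\<^sup>2"
    by simp
  also have "(\<Sum>k=1..i. (xhat i v k)\<^sup>2) = (\<Sum>l=1..i. (v l)\<^sup>2)"
    by (rule sum.cong) (auto simp: xhat_def)
  also have "(xhat i v (i+1))\<^sup>2 = \<bar>1 - (\<Sum>l=1..i. (v l)\<^sup>2)\<bar>"
    by (simp add: xhat_def sqrt_sq_abs)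
  finally show ?thesis .
qed

lemma xhat_norm:
  assumes "i \<le> d" "(\<Sum>l=1..d. (v l)\<^sup>2) \<le> 1"
  shows "(\<Sum>k=1..i+1. (xhat i v k)\<^sup>2) = 1"
  using sum_sq_mono[OF assms(1), of v] assms(2) unfolding xhat_sq_sum by simp

lemma coord_sq_le:
  fixes v :: "nat \<Rightarrow> real"
  assumes "i \<in> {1..d}" "(\<Sum>l=1..d. (v l)\<^sup>2) \<le> 1"
  shows "(v i)\<^sup>2 + (\<Sum>l\<in>{1..i}-{i}. (v l)\<^sup>2) \<le> 1"
proof -
  have "(\<Sum>l=1..i. (v l)\<^sup>2) = (v i)\<^sup>2 + (\<Sum>l\<in>{1..i}-{i}. (v l)\<^sup>2)"
    using assms(1) by (subst sum.remove[of _ i]) auto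
  then show ?thesis using sum_sq_mono[of i d v] assms by auto
qed

lemma xhat_norm_q:
  assumes i: "i \<in> {1..d}" and y: "(\<Sum>l=1..d. (y l)\<^sup>2) \<le> 1" and j: "j \<le> Q" and Q: "Q \<ge> 1"
  shows "(\<Sum>k=1..i+1. (xhat i (qpt Q i y j) k)\<^sup>2) \<le> 3 - 2 * (y i)\<^sup>2"
proof -
  define u where "u = -1 + real j * ((y i + 1) / real Q)"
  have c1: "(y i)\<^sup>2 + (\<Sum>l\<in>{1..i}-{i}. (y l)\<^sup>2) \<le> 1" by (rule coord_sq_le[OF i y])
  have rest: "(\<Sum>l\<in>{1..i}-{i}. (y l)\<^sup>2) \<ge> 0" by (simp add: sum_nonneg)
  have yi: "(y i)\<^sup>2 \<le> 1" using c1 rest by linarith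
  then have yi1: "-1 \<le> y i" "y i \<le> 1" by (auto simp: abs_square_le_1 abs_le_iff)
  have "0 \<le> real j * ((y i + 1) / real Q)" using yi1 by simp
  moreover have "real j * ((y i + 1) / real Q) \<le> y i + 1"
  proof -
    have "real j * ((y i + 1) / real Q) = (real j / real Q) * (y i + 1)" by simp
    also have "\<dots> \<le> 1 * (y i + 1)"
      using j Q yi1 by (intro mult_right_mono) auto
    finally show ?thesis by simp
  qed
  ultimately have u: "-1 \<le> u" "u \<le> 1" unfolding u_def using yi1 by auto
  then have u2: "u\<^sup>2 \<le> 1" by (simp add: abs_square_le_1)
  have qdef: "qpt Q i y j = y(i := u)" unfolding qpt_def u_def by simp
  have "(\<Sum>l=1..i. ((y(i := u)) l)\<^sup>2) = u\<^sup>2 + (\<Sum>l\<in>{1..i}-{i}. ((y(i := u)) l)\<^sup>2)"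
    using i by (subst sum.remove[of _ i]) auto
  also have "(\<Sum>l\<in>{1..i}-{i}. ((y(i := u)) l)\<^sup>2) = (\<Sum>l\<in>{1..i}-{i}. (y l)\<^sup>2)"
    by (rule sum.cong) auto
  finally have S: "(\<Sum>l=1..i. ((y(i := u)) l)\<^sup>2) \<le> 2 - (y i)\<^sup>2" using c1 u2 by linarith
  have S0: "(\<Sum>l=1..i. ((y(i := u)) l)\<^sup>2) \<ge> 0" by (simp add: sum_nonneg)
  show ?thesis unfolding qdef xhat_sq_sum using S S0 yi by (auto simp: abs_if)
qed

lemma ip_bound:
  fixes u v :: "nat \<Rightarrow> real"
  shows "\<bar>\<Sum>k\<in>K. u k * v k\<bar> \<le> sqrt (\<Sum>k\<in>K. (u k)\<^sup>2) * sqrt (\<Sum>k\<in>K. (v k)\<^sup>2)"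
proof -
  have "(\<Sum>k\<in>K. u k * v k)\<^sup>2 \<le> (\<Sum>k\<in>K. (u k)\<^sup>2) * (\<Sum>k\<in>K. (v k)\<^sup>2)"
    by (rule Cauchy_Schwarz_ineq_sum)
  then have "sqrt ((\<Sum>k\<in>K. u k * v k)\<^sup>2) \<le> sqrt ((\<Sum>k\<in>K. (u k)\<^sup>2) * (\<Sum>k\<in>K. (v k)\<^sup>2))"
    by (rule real_sqrt_le_mono)
  then show ?thesis by (simp add: real_sqrt_mult)
qed

lemma poly_bound:
  fixes a :: real assumes "-1 \<le> a" "a \<le> 1"
  shows "(a + 1) * (sqrt (3 - 2 * a\<^sup>2) + 1) \<le> 9/2"
proof -
  have p: "(a + 1)\<^sup>2 * (3 - 2 * a\<^sup>2) \<le> (7/2 - a)\<^sup>2"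
  proof -
    have "(7/2 - a)\<^sup>2 - (a + 1)\<^sup>2 * (3 - 2 * a\<^sup>2) = 2*a^4 + 4*a^3 - 13*a + 37/4"
      by (simp add: power2_eq_square power4_eq_xxxx power3_eq_cube algebra_simps)
    also have "\<dots> \<ge> 0"
    proof (cases "a \<ge> 0")
      case True
      have "4*a^3 - 12*a + 8 = 4 * (a - 1)\<^sup>2 * (a + 2)"
        by (simp add: power2_eq_square power3_eq_cube algebra_simps)
      also have "\<dots> \<ge> 0" using True by simp
      finally have "4*a^3 - 12*a + 8 \<ge> 0" .
      moreover have "2*a^4 \<ge> 0" by simp
      ultimately show ?thesis using assms by linarith
    next
      case False
      have "a^3 \<ge> -1"
      proof -
        have "(-a)^3 \<le> 1^3" using False assms by (intro power_mono) auto
        then show ?thesis by (simp add: power3_eq_cube)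
      qed
      moreover have "2*a^4 \<ge> 0" by simp
      ultimately show ?thesis using False by linarith
    qed
    finally show ?thesis by simp
  qed
  have "(a + 1) * sqrt (3 - 2 * a\<^sup>2) = sqrt ((a + 1)\<^sup>2 * (3 - 2 * a\<^sup>2))"
    using assms by (simp add: real_sqrt_mult)
  also have "\<dots> \<le> sqrt ((7/2 - a)\<^sup>2)" using p by (rule real_sqrt_le_mono)
  also have "\<dots> = 7/2 - a" using assms by simp
  finally show ?thesis by (simp add: algebra_simps)
qed

definition ipx :: "nat \<Rightarrow> (nat \<Rightarrow> real) \<Rightarrow> (nat \<Rightarrow> real) \<Rightarrow> real" where
  "ipx i x v = (\<Sum>k=1..i+1. xhat i v k * xhat i x k)"

lemma grad_combo:
  "(\<Sum>k=1..i+1. grad_w m Q \<omega> i th y r k * xhat i x k) + grad_b m Q \<omega> i th y r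
   = \<omega> (A i r) * ((\<Sum>j=1..Q. ((y i + 1) / real Q) * phi' (netN m \<omega> i th (qpt Q i y j))
            * relu' (preact \<omega> i th r (qpt Q i y j)) * (ipx i x (qpt Q i y j) + 1))
      - (phi' (netN m \<omega> i th y) / phi (netN m \<omega> i th y)) * relu' (preact \<omega> i th r y) * (ipx i x y + 1))"
proof -
  define T where "T j = ((y i + 1) / real Q) * phi' (netN m \<omega> i th (qpt Q i y j)) * \<omega> (A i r)
      * relu' (preact \<omega> i th r (qpt Q i y j))" for j
  define U where "U = (phi' (netN m \<omega> i th y) / phi (netN m \<omega> i th y)) * \<omega> (A i r) * relu' (preact \<omega> i th r y)"
  have gw: "grad_w m Q \<omega> i th y r k = (\<Sum>j=1..Q. T j * xhat i (qpt Q i y j) k) - U * xhat i y k" for k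
    unfolding grad_w_def T_def U_def by simp
  have gb: "grad_b m Q \<omega> i th y r = (\<Sum>j=1..Q. T j) - U"
    unfolding grad_b_def T_def U_def by simp
  have "(\<Sum>k=1..i+1. grad_w m Q \<omega> i th y r k * xhat i x k)
      = (\<Sum>k=1..i+1. (\<Sum>j=1..Q. T j * xhat i (qpt Q i y j) k) * xhat i x k - U * (xhat i y k * xhat i x k))"
    by (rule sum.cong) (simp_all add: gw algebra_simps)
  also have "\<dots> = (\<Sum>k=1..i+1. (\<Sum>j=1..Q. T j * xhat i (qpt Q i y j) k) * xhat i x k)
      - (\<Sum>k=1..i+1. U * (xhat i y k * xhat i x k))"
    by (rule sum_subtractf)
  also have "(\<Sum>k=1..i+1. U * (xhat i y k * xhat i x k)) = U * ipx i x y"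
    by (simp only: ipx_def sum_distrib_left)
  also have "(\<Sum>k=1..i+1. (\<Sum>j=1..Q. T j * xhat i (qpt Q i y j) k) * xhat i x k)
      = (\<Sum>k=1..i+1. \<Sum>j=1..Q. T j * (xhat i (qpt Q i y j) k * xhat i x k))"
    by (simp only: sum_distrib_right mult.assoc)
  also have "\<dots> = (\<Sum>j=1..Q. \<Sum>k=1..i+1. T j * (xhat i (qpt Q i y j) k * xhat i x k))"
    by (rule sum.swap)
  also have "\<dots> = (\<Sum>j=1..Q. T j * ipx i x (qpt Q i y j))"
    by (simp only: ipx_def sum_distrib_left)
  finally have "(\<Sum>k=1..i+1. grad_w m Q \<omega> i th y r k * xhat i x k) + grad_b m Q \<omega> i th y r
     = (\<Sum>j=1..Q. T j * (ipx i x (qpt Q i y j) + 1)) - U * (ipx i x y + 1)"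
    unfolding gb by (simp add: algebra_simps sum.distrib)
  also have "\<dots> = \<omega> (A i r) * ((\<Sum>j=1..Q. ((y i + 1) / real Q) * phi' (netN m \<omega> i th (qpt Q i y j))
            * relu' (preact \<omega> i th r (qpt Q i y j)) * (ipx i x (qpt Q i y j) + 1))
      - (phi' (netN m \<omega> i th y) / phi (netN m \<omega> i th y)) * relu' (preact \<omega> i th r y) * (ipx i x y + 1))"
    unfolding T_def U_def by (simp add: algebra_simps sum_distrib_left)
  finally show ?thesis .
qed

lemma relu'_01: "relu' u = 0 \<or> relu' u = 1"
  unfolding relu'_def by auto

lemma prod_bounds:
  fixes w z c lo hi :: real
  assumes "0 \<le> w" "w \<le> c" "lo \<le> z" "z \<le> hi" "lo \<le> 0" "0 \<le> hi"
  shows "c * lo \<le> w * z" "w * z \<le> c * hi"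
proof -
  show "c * lo \<le> w * z"
  proof (cases "z \<ge> 0")
    case True
    have "c * lo \<le> 0" using assms by (simp add: mult_nonneg_nonpos)
    also have "0 \<le> w * z" using assms True by simp
    finally show ?thesis .
  next
    case False
    have "c * lo \<le> w * lo" using assms by (intro mult_right_mono_neg) auto
    also have "\<dots> \<le> w * z" using assms by (intro mult_left_mono) auto
    finally show ?thesis .
  qed
  show "w * z \<le> c * hi"
  proof (cases "z \<ge> 0")
    case True
    have "w * z \<le> c * z" using assms True by (intro mult_right_mono) auto
    also have "\<dots> \<le> c * hi" using assms True by (intro mult_left_mono) auto
    finally show ?thesis .
  next
    case False
    have "w * z \<le> 0" using assms False by (simp add: mult_nonneg_nonpos)
    also have "0 \<le> c * hi" using assms by simp
    finally show ?thesis .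
  qed
qed

lemma step_bound:
  assumes i: "i \<in> {1..d}" and Q: "Q \<ge> 1"
    and y: "(\<Sum>l=1..d. (y l)\<^sup>2) \<le> 1" and x: "(\<Sum>l=1..d. (x l)\<^sup>2) \<le> 1"
  shows "\<bar>(\<Sum>k=1..i+1. grad_w m Q \<omega> i th y r k * xhat i x k) + grad_b m Q \<omega> i th y r\<bar> \<le> 9/2 * \<bar>\<omega> (A i r)\<bar>"
proof -
  define c where "c = (y i + 1) / real Q"
  define R where "R = sqrt (3 - 2 * (y i)\<^sup>2)"
  define Aterm where "Aterm = (\<Sum>j=1..Q. c * phi' (netN m \<omega> i th (qpt Q i y j))
            * relu' (preact \<omega> i th r (qpt Q i y j)) * (ipx i x (qpt Q i y j) + 1))"
  define Bterm where "Bterm = (phi' (netN m \<omega> i th y) / phi (netN m \<omega> i th y)) * relu' (preact \<omega> i th r y) * (ipx i x y + 1)"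
  have c1: "(y i)\<^sup>2 + (\<Sum>l\<in>{1..i}-{i}. (y l)\<^sup>2) \<le> 1" by (rule coord_sq_le[OF i y])
  have rest: "(\<Sum>l\<in>{1..i}-{i}. (y l)\<^sup>2) \<ge> 0" by (simp add: sum_nonneg)
  have yi: "(y i)\<^sup>2 \<le> 1" using c1 rest by linarith
  then have yi1: "-1 \<le> y i" "y i \<le> 1" by (auto simp: abs_square_le_1 abs_le_iff)
  have c0: "c \<ge> 0" unfolding c_def using yi1 by simp
  have Qc: "real Q * c = y i + 1" unfolding c_def using Q by simp
  have R1: "1 \<le> R" unfolding R_def using yi by simp
  have R3: "R \<le> 9/4"
  proof -
    have "0 \<le> (y i)\<^sup>2" by simp
    then have "3 - 2 * (y i)\<^sup>2 \<le> 81/16" by linarith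
    moreover have "(81/16::real) = (9/4)\<^sup>2" by (simp add: power2_eq_square)
    ultimately have "R \<le> sqrt ((9/4)\<^sup>2)" unfolding R_def by (intro real_sqrt_le_mono) simp
    then show ?thesis by simp
  qed
  have xn: "(\<Sum>k=1..i+1. (xhat i x k)\<^sup>2) = 1" using xhat_norm[OF _ x] i by simp
  have ipq: "\<bar>ipx i x (qpt Q i y j)\<bar> \<le> R" if "j \<in> {1..Q}" for j
  proof -
    have "\<bar>ipx i x (qpt Q i y j)\<bar> \<le> sqrt (\<Sum>k=1..i+1. (xhat i (qpt Q i y j) k)\<^sup>2) * sqrt (\<Sum>k=1..i+1. (xhat i x k)\<^sup>2)"
      unfolding ipx_def by (rule ip_bound)
    also have "\<dots> \<le> R" unfolding xn R_def
      using xhat_norm_q[OF i y _ Q, of j] that by (simp add: real_sqrt_le_mono)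
    finally show ?thesis .
  qed
  have ipy: "\<bar>ipx i x y\<bar> \<le> 1"
  proof -
    have "\<bar>ipx i x y\<bar> \<le> sqrt (\<Sum>k=1..i+1. (xhat i y k)\<^sup>2) * sqrt (\<Sum>k=1..i+1. (xhat i x k)\<^sup>2)"
      unfolding ipx_def by (rule ip_bound)
    also have "\<dots> = 1" unfolding xn using xhat_norm[OF _ y] i by simp
    finally show ?thesis .
  qed
  have term_b: "- c * (R - 1) \<le> c * phi' (netN m \<omega> i th (qpt Q i y j)) * relu' (preact \<omega> i th r (qpt Q i y j)) * (ipx i x (qpt Q i y j) + 1)
     \<and> c * phi' (netN m \<omega> i th (qpt Q i y j)) * relu' (preact \<omega> i th r (qpt Q i y j)) * (ipx i x (qpt Q i y j) + 1) \<le> c * (R + 1)"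
    if "j \<in> {1..Q}" for j
  proof -
    define w where "w = c * phi' (netN m \<omega> i th (qpt Q i y j)) * relu' (preact \<omega> i th r (qpt Q i y j))"
    have w0: "0 \<le> w" unfolding w_def using c0 phi'_nonneg relu'_01 
      by (metis mult_nonneg_nonneg order_refl zero_le_one mult_zero_right)
    have "c * phi' (netN m \<omega> i th (qpt Q i y j)) \<le> c"
      using c0 phi'_le1 mult_left_le by blast
    then have wc: "w \<le> c" unfolding w_def using c0 relu'_01[of "preact \<omega> i th r (qpt Q i y j)"]
      by auto
    have "c * (1 - R) \<le> w * (ipx i x (qpt Q i y j) + 1)" "w * (ipx i x (qpt Q i y j) + 1) \<le> c * (R + 1)"
      using prod_bounds[OF w0 wc, of "1 - R" "ipx i x (qpt Q i y j) + 1" "R + 1"] ipq[OF that] R1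
      by (auto simp: abs_le_iff)
    then show ?thesis unfolding w_def by (simp add: algebra_simps)
  qed
  have Aup: "Aterm \<le> (y i + 1) * (R + 1)"
  proof -
    have "Aterm \<le> (\<Sum>j=1..Q. c * (R + 1))" unfolding Aterm_def
      by (rule sum_mono) (use term_b in blast)
    also have "\<dots> = (y i + 1) * (R + 1)" using Qc by (simp add: mult.assoc[symmetric])
    finally show ?thesis .
  qed
  have Alo: "- ((y i + 1) * (R - 1)) \<le> Aterm"
  proof -
    have "(\<Sum>j=1..Q. - c * (R - 1)) \<le> Aterm" unfolding Aterm_def
      by (rule sum_mono) (use term_b in blast)
    moreover have "(\<Sum>j=1..Q. - c * (R - 1)) = - (real Q * c * (R - 1))" by simp
    moreover have "real Q * c * (R - 1) = (y i + 1) * (R - 1)" using Qc by simp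
    ultimately show ?thesis by linarith
  qed
  have B: "0 \<le> Bterm" "Bterm \<le> 2"
  proof -
    define w where "w = (phi' (netN m \<omega> i th y) / phi (netN m \<omega> i th y)) * relu' (preact \<omega> i th r y)"
    have w0: "0 \<le> w" "w \<le> 1" unfolding w_def using phi_ratio relu'_01[of "preact \<omega> i th r y"]
      by auto
    have "0 \<le> ipx i x y + 1" "ipx i x y + 1 \<le> 2" using ipy by (auto simp: abs_le_iff)
    then show "0 \<le> Bterm" "Bterm \<le> 2" unfolding Bterm_def w_def[symmetric]
      using w0 by (auto intro: mult_nonneg_nonneg mult_le_one[of w, THEN order.trans] 
          simp: mult_le_cancel_right1 order.trans[OF mult_left_le_one_le] mult_le_one)
  qed
  have P: "(y i + 1) * (R + 1) \<le> 9/2" unfolding R_def using poly_bound yi1 by blast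
  have "(y i + 1) * (R - 1) \<le> 2 * (R - 1)" using yi1 R1 by (intro mult_right_mono) auto
  then have K: "(y i + 1) * (R - 1) \<le> 2 * R - 2" by (simp add: algebra_simps)
  have lo0: "-(9/2) \<le> a1 - b1" if "-k1 \<le> a1" "k1 \<le> 2 * R - 2" "b1 \<le> 2" "R \<le> 9/4" for a1 b1 k1 :: real
    using that by linarith
  have lo: "-(9/2) \<le> Aterm - Bterm" using lo0[OF Alo K B(2) R3] .
  have up: "Aterm - Bterm \<le> 9/2" using Aup B P by linarith
  have ab: "\<bar>Aterm - Bterm\<bar> \<le> 9/2" unfolding abs_le_iff using lo up by linarith
  have eq:  "(\<Sum>k=1..i+1. grad_w m Q \<omega> i th y r k * xhat i x k) + grad_b m Q \<omega> i th y r
     = \<omega> (A i r) * (Aterm - Bterm)"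
    unfolding grad_combo Aterm_def Bterm_def c_def by simp
  have "\<bar>\<omega> (A i r) * (Aterm - Bterm)\<bar> = \<bar>Aterm - Bterm\<bar> * \<bar>\<omega> (A i r)\<bar>" by (simp add: abs_mult)
  also have "\<dots> \<le> 9/2 * \<bar>\<omega> (A i r)\<bar>" using ab by (rule mult_right_mono) simp
  finally show ?thesis unfolding eq .
qed

lemma lin_comb:
  fixes f g h :: "nat \<Rightarrow> real"
  shows "(\<Sum>k\<in>K. (f k - e * g k) * h k) + (b - e * c) = ((\<Sum>k\<in>K. f k * h k) + b) - e * ((\<Sum>k\<in>K. g k * h k) + c)"
  by (simp add: sum_subtractf left_diff_distrib sum_distrib_left algebra_simps)

lemma sgd_D_bound:
  assumes i: "i \<in> {1..d}" and Q: "Q \<ge> 1" and xs: "\<forall>s. (\<Sum>k=1..d. (xs s k)\<^sup>2) \<le> 1"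
    and x: "(\<Sum>k=1..d. (x k)\<^sup>2) \<le> 1" and eta: "\<eta> > 0"
  shows "\<bar>(\<Sum>k=1..i+1. fst (sgd m Q \<eta> \<omega> i xs t r) k * xhat i x k) + snd (sgd m Q \<eta> \<omega> i xs t r)\<bar>
         \<le> 9/2 * \<eta> * real t * \<bar>\<omega> (A i r)\<bar>"
proof (induction t)
  case 0
  then show ?case by simp
next
  case (Suc t)
  define th where "th = sgd m Q \<eta> \<omega> i xs t"
  have "(\<Sum>k=1..i+1. fst (sgd m Q \<eta> \<omega> i xs (Suc t) r) k * xhat i x k) + snd (sgd m Q \<eta> \<omega> i xs (Suc t) r)
     = (\<Sum>k=1..i+1. (fst (th r) k - \<eta> * grad_w m Q \<omega> i th (xs t) r k) * xhat i x k) + (snd (th r) - \<eta> * grad_b m Q \<omega> i th (xs t) r)"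
    unfolding th_def by simp
  also have "\<dots> = ((\<Sum>k=1..i+1. fst (th r) k * xhat i x k) + snd (th r))
     - \<eta> * ((\<Sum>k=1..i+1. grad_w m Q \<omega> i th (xs t) r k * xhat i x k) + grad_b m Q \<omega> i th (xs t) r)"
    by (rule lin_comb)
  finally have eq: "(\<Sum>k=1..i+1. fst (sgd m Q \<eta> \<omega> i xs (Suc t) r) k * xhat i x k) + snd (sgd m Q \<eta> \<omega> i xs (Suc t) r)
     = ((\<Sum>k=1..i+1. fst (th r) k * xhat i x k) + snd (th r))
     - \<eta> * ((\<Sum>k=1..i+1. grad_w m Q \<omega> i th (xs t) r k * xhat i x k) + grad_b m Q \<omega> i th (xs t) r)" .
  have g: "\<bar>(\<Sum>k=1..i+1. grad_w m Q \<omega> i th (xs t) r k * xhat i x k) + grad_b m Q \<omega> i th (xs t) r\<bar> \<le> 9/2 * \<bar>\<omega> (A i r)\<bar>"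
    by (rule step_bound[OF i Q _ x]) (use xs in auto)
  have g2: "\<bar>\<eta> * ((\<Sum>k=1..i+1. grad_w m Q \<omega> i th (xs t) r k * xhat i x k) + grad_b m Q \<omega> i th (xs t) r)\<bar> \<le> \<eta> * (9/2 * \<bar>\<omega> (A i r)\<bar>)"
    unfolding abs_mult using eta g by (simp add: mult_left_mono)
  have "\<bar>(\<Sum>k=1..i+1. fst (th r) k * xhat i x k) + snd (th r)\<bar> \<le> 9/2 * \<eta> * real t * \<bar>\<omega> (A i r)\<bar>"
    using Suc.IH unfolding th_def .
  have tri: "\<bar>p - q\<bar> \<le> X + Y" if "\<bar>p\<bar> \<le> X" "\<bar>q\<bar> \<le> Y" for p q X Y :: real
    using that abs_triangle_ineq4[of p q] by linarith
  have fin: "9/2 * \<eta> * real t * \<bar>\<omega> (A i r)\<bar> + \<eta> * (9/2 * \<bar>\<omega> (A i r)\<bar>) = 9/2 * \<eta> * real (Suc t) * \<bar>\<omega> (A i r)\<bar>"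
    by (simp add: algebra_simps)
  show ?case unfolding eq using tri[OF \<open>\<bar>(\<Sum>k=1..i+1. fst (th r) k * xhat i x k) + snd (th r)\<bar> \<le> _\<close> g2] fin by simp
qed

lemma preact_split:
  "preact \<omega> i th r x = preact0 \<omega> i r x + ((\<Sum>k=1..i+1. fst (th r) k * xhat i x k) + snd (th r))"
  unfolding preact_def preact0_def by (simp add: distrib_right sum.distrib algebra_simps)

lemma NP_bound:
  assumes aL: "\<forall>r\<in>{1..m}. \<bar>\<omega> (A i r)\<bar> \<le> L"
    and DE: "\<forall>r\<in>{1..m}. \<bar>preact \<omega> i th r x - preact0 \<omega> i r x\<bar> \<le> E * \<bar>\<omega> (A i r)\<bar>" and E: "E \<ge> 0"
  shows "\<bar>netN m \<omega> i th x - netP m \<omega> i th x\<bar>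
     \<le> E * L\<^sup>2 * (\<Sum>r=1..m. if \<bar>preact0 \<omega> i r x\<bar> \<le> E * L then 1 else 0)"
proof -
  define z where "z r = preact0 \<omega> i r x" for r
  define D where "D r = preact \<omega> i th r x - preact0 \<omega> i r x" for r
  have pz: "preact \<omega> i th r x = z r + D r" for r unfolding z_def D_def by simp
  have "netN m \<omega> i th x - netP m \<omega> i th x = (\<Sum>r=1..m. \<omega> (A i r) * (relu (z r + D r) - relu' (z r) * (z r + D r)))"
    unfolding netN_def netP_def pz by (simp add: sum_subtractf[symmetric] z_def algebra_simps)
  also have "\<bar>\<dots>\<bar> \<le> (\<Sum>r=1..m. \<bar>\<omega> (A i r) * (relu (z r + D r) - relu' (z r) * (z r + D r))\<bar>)"
    by (rule sum_abs)
  also have "\<dots> \<le> (\<Sum>r=1..m. E * L\<^sup>2 * (if \<bar>z r\<bar> \<le> E * L then 1 else 0))"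
  proof (rule sum_mono)
    fix r assume r: "r \<in> {1..m}"
    have a: "\<bar>\<omega> (A i r)\<bar> \<le> L" using aL r by blast
    have d: "\<bar>D r\<bar> \<le> E * \<bar>\<omega> (A i r)\<bar>" using DE r unfolding D_def by blast
    have dl: "\<bar>D r\<bar> \<le> E * L" using d a E by (meson mult_left_mono order.trans)
    have "\<bar>\<omega> (A i r) * (relu (z r + D r) - relu' (z r) * (z r + D r))\<bar>
        \<le> \<bar>\<omega> (A i r)\<bar> * (\<bar>D r\<bar> * (if \<bar>z r\<bar> \<le> \<bar>D r\<bar> then 1 else 0))"
      unfolding abs_mult by (rule mult_left_mono[OF relu_err]) simp
    also have "\<dots> \<le> E * L\<^sup>2 * (if \<bar>z r\<bar> \<le> E * L then 1 else 0)"
    proof (cases "\<bar>z r\<bar> \<le> \<bar>D r\<bar>")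
      case True
      then have "\<bar>z r\<bar> \<le> E * L" using dl by linarith
      moreover have "\<bar>\<omega> (A i r)\<bar> * \<bar>D r\<bar> \<le> L * (E * L)"
        using a dl by (intro mult_mono) auto
      ultimately show ?thesis using True by (simp add: power2_eq_square algebra_simps)
    next
      case False
      have "0 \<le> L" using a by linarith
      then show ?thesis using False E by simp
    qed
    finally show "\<bar>\<omega> (A i r) * (relu (z r + D r) - relu' (z r) * (z r + D r))\<bar>
        \<le> E * L\<^sup>2 * (if \<bar>z r\<bar> \<le> E * L then 1 else 0)" .
  qed
  also have "\<dots> = E * L\<^sup>2 * (\<Sum>r=1..m. if \<bar>preact0 \<omega> i r x\<bar> \<le> E * L then 1 else 0)"
    unfolding z_def by (simp add: sum_distrib_left)
  finally show ?thesis .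
qed



lemma relu_meas[measurable]: "relu \<in> borel_measurable borel"
proof -
  have eq: "relu = (\<lambda>u. max u 0)" by (rule ext) (simp add: relu_def)
  show ?thesis unfolding eq by measurable
qed

lemma relu'_meas[measurable]: "relu' \<in> borel_measurable borel"
proof -
  have eq: "relu' = (\<lambda>u::real. if u \<ge> 0 then 1 else 0)" by (rule ext) (simp add: relu'_def)
  show ?thesis unfolding eq by measurable
qed

lemma phi_meas[measurable]: "phi \<in> borel_measurable borel"
proof -
  have eq: "phi = (\<lambda>u::real. if u < 0 then exp u else u + 1)" by (rule ext) (simp add: phi_def)
  show ?thesis unfolding eq by measurable
qed

lemma phi'_meas[measurable]: "phi' \<in> borel_measurable borel"
proof -
  have eq: "phi' = (\<lambda>u::real. if u < 0 then exp u else 1)" by (rule ext) (simp add: phi'_def)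
  show ?thesis unfolding eq by measurable
qed

lemma sgd_meas:
  "(\<lambda>\<omega>. fst (sgd m Q \<eta> \<omega> i xs t r) k) \<in> borel_measurable (init_measure d m eps_a) \<and>
   (\<lambda>\<omega>. snd (sgd m Q \<eta> \<omega> i xs t r)) \<in> borel_measurable (init_measure d m eps_a)"
proof (induction t arbitrary: r k)
  case 0
  then show ?case by simp
next
  case (Suc t)
  have IH1[measurable]: "(\<lambda>\<omega>. fst (sgd m Q \<eta> \<omega> i xs t r') k') \<in> borel_measurable (init_measure d m eps_a)" for r' k'
    using Suc.IH by blast
  have IH2[measurable]: "(\<lambda>\<omega>. snd (sgd m Q \<eta> \<omega> i xs t r')) \<in> borel_measurable (init_measure d m eps_a)" for r'
    using Suc.IH by blast
  have pre[measurable]: "(\<lambda>\<omega>. preact \<omega> i (sgd m Q \<eta> \<omega> i xs t) r' q) \<in> borel_measurable (init_measure d m eps_a)" for r' q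
    unfolding preact_def by measurable
  have net[measurable]: "(\<lambda>\<omega>. netN m \<omega> i (sgd m Q \<eta> \<omega> i xs t) q) \<in> borel_measurable (init_measure d m eps_a)" for q
    unfolding netN_def by measurable
  have gw[measurable]: "(\<lambda>\<omega>. grad_w m Q \<omega> i (sgd m Q \<eta> \<omega> i xs t) q r' k') \<in> borel_measurable (init_measure d m eps_a)" for q r' k'
    unfolding grad_w_def by measurable
  have gb[measurable]: "(\<lambda>\<omega>. grad_b m Q \<omega> i (sgd m Q \<eta> \<omega> i xs t) q r') \<in> borel_measurable (init_measure d m eps_a)" for q r'
    unfolding grad_b_def by measurable
  show ?case by simp
qed

lemma NP_meas:
  "(\<lambda>\<omega>. netN m \<omega> i (sgd m Q \<eta> \<omega> i xs t) x) \<in> borel_measurable (init_measure d m eps_a)"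
  "(\<lambda>\<omega>. netP m \<omega> i (sgd m Q \<eta> \<omega> i xs t) x) \<in> borel_measurable (init_measure d m eps_a)"
proof -
  have IH1[measurable]: "(\<lambda>\<omega>. fst (sgd m Q \<eta> \<omega> i xs t r') k') \<in> borel_measurable (init_measure d m eps_a)" for r' k'
    using sgd_meas by blast
  have IH2[measurable]: "(\<lambda>\<omega>. snd (sgd m Q \<eta> \<omega> i xs t r')) \<in> borel_measurable (init_measure d m eps_a)" for r'
    using sgd_meas by blast
  have pre[measurable]: "(\<lambda>\<omega>. preact \<omega> i (sgd m Q \<eta> \<omega> i xs t) r' q) \<in> borel_measurable (init_measure d m eps_a)" for r' q
    unfolding preact_def by measurable
  have pre0[measurable]: "(\<lambda>\<omega>. preact0 \<omega> i r' q) \<in> borel_measurable (init_measure d m eps_a)" for r' q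
    unfolding preact0_def by measurable
  show "(\<lambda>\<omega>. netN m \<omega> i (sgd m Q \<eta> \<omega> i xs t) x) \<in> borel_measurable (init_measure d m eps_a)"
    unfolding netN_def by measurable
  show "(\<lambda>\<omega>. netP m \<omega> i (sgd m Q \<eta> \<omega> i xs t) x) \<in> borel_measurable (init_measure d m eps_a)"
    unfolding netP_def by measurable
qed



lemma z_dist:
  assumes m: "m \<ge> 1" and e: "eps_a > 0" and i: "i \<in> {1..d}" and r: "r \<in> {1..m}"
    and x: "(\<Sum>l=1..d. (x l)\<^sup>2) \<le> 1"
  shows "distributed (init_measure d m eps_a) lborel (\<lambda>\<omega>. preact0 \<omega> i r x) (normal_density 0 (sqrt (2 / real m)))"
proof -
  interpret PS: prob_space "init_measure d m eps_a" using ps_init m e by blast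
  define J where "J = {k\<in>{1..i+1}. xhat i x k \<noteq> 0}"
  define I' where "I' = insert (Bb i r) ((\<lambda>k. Wb i r k) ` J)"
  define coef where "coef j = (case j of Wb _ _ k \<Rightarrow> xhat i x k | Bb _ _ \<Rightarrow> 1 | A _ _ \<Rightarrow> 0)" for j
  have finJ: "finite J" unfolding J_def by simp
  have finI: "finite I'" unfolding I'_def using finJ by simp
  have sub: "I' \<subseteq> init_index d m"
    unfolding I'_def J_def init_index_def using i r by auto
  have coef_nz: "coef j \<noteq> 0" if "j \<in> I'" for j
    using that unfolding I'_def J_def coef_def by auto
  have sd: "init_sd m eps_a j = 1 / sqrt (real m)" if "j \<in> I'" for j
    using that unfolding I'_def init_sd_def by auto
  have ind: "PS.indep_vars (\<lambda>_. borel) (\<lambda>j \<omega>. coef j * \<omega> j) I'"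
    using PS.indep_vars_compose2[OF PS.indep_vars_subset[OF indep_coords[OF m e] sub], of "\<lambda>j v. coef j * v" "\<lambda>_. borel"]
    by simp
  have dj: "distributed (init_measure d m eps_a) lborel (\<lambda>\<omega>. coef j * \<omega> j)
      (normal_density 0 (\<bar>coef j\<bar> * (1 / sqrt (real m))))" if "j \<in> I'" for j
  proof -
    have "distributed (init_measure d m eps_a) lborel (\<lambda>\<omega>. 0 + coef j * \<omega> j)
      (normal_density (0 + coef j * 0) (\<bar>coef j\<bar> * init_sd m eps_a j))"
      by (rule PS.normal_density_affine[OF comp_dist[OF m e]])
         (use sub that coef_nz init_sd_pos[OF m e] in auto)
    then show ?thesis using sd[OF that] by simp
  qed
  have D: "distributed (init_measure d m eps_a) lborel (\<lambda>\<omega>. \<Sum>j\<in>I'. coef j * \<omega> j)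
     (normal_density (\<Sum>j\<in>I'. 0) (sqrt (\<Sum>j\<in>I'. (\<bar>coef j\<bar> * (1 / sqrt (real m)))\<^sup>2)))"
    by (rule PS.sum_indep_normal[OF finI _ ind _ dj])
       (use coef_nz m in \<open>auto simp: I'_def\<close>)
  have injW: "inj_on (\<lambda>k. Wb i r k) J" by (auto simp: inj_on_def)
  have notin: "Bb i r \<notin> (\<lambda>k. Wb i r k) ` J" by auto
  have sumI: "(\<Sum>j\<in>I'. f j) = f (Bb i r) + (\<Sum>k\<in>J. f (Wb i r k))" for f :: "pid \<Rightarrow> real"
    unfolding I'_def using finJ notin by (simp add: sum.reindex[OF injW])
  have zero_out: "(\<Sum>k\<in>J. g k * xhat i x k) = (\<Sum>k=1..i+1. g k * xhat i x k)" for g :: "nat \<Rightarrow> real"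
    by (rule sum.mono_neutral_left) (auto simp: J_def)
  have fun_eq: "(\<lambda>\<omega>. \<Sum>j\<in>I'. coef j * \<omega> j) = (\<lambda>\<omega>. preact0 \<omega> i r x)"
  proof
    fix \<omega> :: "pid \<Rightarrow> real"
    have "(\<Sum>j\<in>I'. coef j * \<omega> j) = \<omega> (Bb i r) + (\<Sum>k\<in>J. \<omega> (Wb i r k) * xhat i x k)"
      unfolding sumI by (simp add: coef_def mult.commute)
    also have "\<dots> = preact0 \<omega> i r x" unfolding zero_out preact0_def by simp
    finally show "(\<Sum>j\<in>I'. coef j * \<omega> j) = preact0 \<omega> i r x" .
  qed
  have var_eq: "(\<Sum>j\<in>I'. (\<bar>coef j\<bar> * (1 / sqrt (real m)))\<^sup>2) = 2 / real m"
  proof -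
    have "(\<Sum>j\<in>I'. (\<bar>coef j\<bar> * (1 / sqrt (real m)))\<^sup>2) = (\<Sum>j\<in>I'. (coef j)\<^sup>2) / real m"
      using m by (simp add: power_mult_distrib power_divide sum_divide_distrib)
    also have "(\<Sum>j\<in>I'. (coef j)\<^sup>2) = 1 + (\<Sum>k\<in>J. (xhat i x k)\<^sup>2)"
      unfolding sumI by (simp add: coef_def)
    also have "(\<Sum>k\<in>J. (xhat i x k)\<^sup>2) = (\<Sum>k=1..i+1. (xhat i x k)\<^sup>2)"
      using zero_out[of "xhat i x"] by (simp add: power2_eq_square)
    also have "\<dots> = 1" using xhat_norm[OF _ x] i by simp
    finally show ?thesis by simp
  qed
  show ?thesis using D unfolding fun_eq var_eq by simp
qed



lemma z_small:
  assumes m: "m \<ge> 1" and e: "eps_a > 0" and i: "i \<in> {1..d}" and r: "r \<in> {1..m}"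
    and x: "(\<Sum>l=1..d. (x l)\<^sup>2) \<le> 1" and eps: "\<epsilon> \<ge> 0"
  shows "measure (init_measure d m eps_a) {\<omega>\<in>space (init_measure d m eps_a). \<bar>preact0 \<omega> i r x\<bar> \<le> \<epsilon>}
     \<le> \<epsilon> * sqrt (real m) / sqrt pi"
proof -
  interpret PS: prob_space "init_measure d m eps_a" using ps_init m e by blast
  have "measure (init_measure d m eps_a) {\<omega>\<in>space (init_measure d m eps_a). \<bar>preact0 \<omega> i r x\<bar> \<le> \<epsilon>}
     \<le> 2 * \<epsilon> / (sqrt (2 / real m) * sqrt (2 * pi))"
    by (rule PS.normal_small_ball[OF z_dist[OF m e i r x] _ eps]) (use m in simp)
  also have "sqrt (2 / real m) * sqrt (2 * pi) = 2 * sqrt pi / sqrt (real m)"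
  proof -
    have "sqrt (2 / real m) * sqrt (2 * pi) = sqrt (4 * pi / real m)"
      by (simp add: real_sqrt_mult[symmetric])
    also have "\<dots> = 2 * sqrt pi / sqrt (real m)"
      by (simp add: real_sqrt_divide real_sqrt_mult)
    finally show ?thesis .
  qed
  also have "2 * \<epsilon> / (2 * sqrt pi / sqrt (real m)) = \<epsilon> * sqrt (real m) / sqrt pi"
    by (simp add: field_simps)
  finally show ?thesis .
qed

definition Ycnt :: "real \<Rightarrow> nat \<Rightarrow> (nat \<Rightarrow> real) \<Rightarrow> nat \<Rightarrow> (pid \<Rightarrow> real) \<Rightarrow> real" where
  "Ycnt \<epsilon> i x r \<omega> = (if \<bar>preact0 \<omega> i r x\<bar> \<le> \<epsilon> then 1 else 0)"

lemma Ycnt_meas[measurable]: "Ycnt \<epsilon> i x r \<in> borel_measurable (init_measure d m eps_a)"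
proof -
  have [measurable]: "(\<lambda>\<omega>. preact0 \<omega> i r x) \<in> borel_measurable (init_measure d m eps_a)"
    unfolding preact0_def by measurable
  show ?thesis unfolding Ycnt_def[abs_def] by measurable
qed

lemma Y_indep:
  assumes m: "m \<ge> 1" and e: "eps_a > 0" and i: "i \<in> {1..d}"
  shows "prob_space.indep_vars (init_measure d m eps_a) (\<lambda>_. borel) (\<lambda>r. Ycnt \<epsilon> i x r) {1..m}"
proof -
  interpret PS: prob_space "init_measure d m eps_a" using ps_init m e by blast
  define K where "K r = insert (Bb i r) ((\<lambda>k. Wb i r k) ` {1..i+1})" for r
  have Ksub: "K r \<subseteq> init_index d m" if "r \<in> {1..m}" for r
    unfolding K_def init_index_def using i that by auto
  have disj: "disjoint_family_on K {1..m}"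
    unfolding disjoint_family_on_def K_def by auto
  have R: "PS.indep_vars (\<lambda>r. PiM (K r) (\<lambda>_. borel)) (\<lambda>r \<omega>. restrict (\<lambda>j. \<omega> j) (K r)) {1..m}"
    by (rule PS.indep_vars_restrict[OF indep_coords[OF m e] Ksub disj])
  define Yf where "Yf r f = (if \<bar>(\<Sum>k=1..i+1. f (Wb i r k) * xhat i x k) + f (Bb i r)\<bar> \<le> \<epsilon> then 1 else (0::real))"
    for r and f :: "pid \<Rightarrow> real"
  have Yf_meas: "Yf r \<in> borel_measurable (PiM (K r) (\<lambda>_. borel))" for r
  proof -
    have c: "(\<lambda>f. f j) \<in> borel_measurable (PiM (K r) (\<lambda>_. borel))" if "j \<in> K r" for j
      using measurable_component_singleton[OF that, of "\<lambda>_. borel"] .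
    have s[measurable]: "(\<lambda>f. \<Sum>k=1..i+1. f (Wb i r k) * xhat i x k) \<in> borel_measurable (PiM (K r) (\<lambda>_. borel))"
      by (intro borel_measurable_sum borel_measurable_times c borel_measurable_const) (auto simp: K_def)
    have b[measurable]: "(\<lambda>f. f (Bb i r)) \<in> borel_measurable (PiM (K r) (\<lambda>_. borel))"
      by (rule c) (simp add: K_def)
    show ?thesis unfolding Yf_def[abs_def] by measurable
  qed
  have C: "PS.indep_vars (\<lambda>_. borel) (\<lambda>r \<omega>. Yf r (restrict (\<lambda>j. \<omega> j) (K r))) {1..m}"
    by (rule PS.indep_vars_compose2[OF R Yf_meas])
  have eq: "(\<lambda>\<omega>. Yf r (restrict (\<lambda>j. \<omega> j) (K r))) = Ycnt \<epsilon> i x r" for r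
    by (rule ext) (simp add: Yf_def Ycnt_def preact0_def K_def)
  show ?thesis using C unfolding eq .
qed

lemma hoeff_bound:
  assumes m: "m \<ge> 1" and e: "eps_a > 0" and i: "i \<in> {1..d}"
    and x: "(\<Sum>l=1..d. (x l)\<^sup>2) \<le> 1" and eps: "\<epsilon> \<ge> 0" and s: "s \<ge> 0"
  shows "measure (init_measure d m eps_a) {\<omega>\<in>space (init_measure d m eps_a).
      real m * (\<epsilon> * sqrt (real m) / sqrt pi) + s \<le> (\<Sum>r=1..m. Ycnt \<epsilon> i x r \<omega>)} \<le> exp (- 2 * s\<^sup>2 / real m)"
proof -
  interpret PS: prob_space "init_measure d m eps_a" using ps_init m e by blast
  interpret H: Hoeffding_ineq "init_measure d m eps_a" "{1..m}" "\<lambda>r. Ycnt \<epsilon> i x r" "\<lambda>_. 0" "\<lambda>_. 1"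
     "\<Sum>r\<in>{1..m}. PS.expectation (Ycnt \<epsilon> i x r)"
  proof unfold_locales
    show "PS.indep_vars (\<lambda>_. borel) (\<lambda>r. Ycnt \<epsilon> i x r) {1..m}" by (rule Y_indep[OF m e i])
  qed (auto simp: Ycnt_def)
  have ex: "PS.expectation (Ycnt \<epsilon> i x r) \<le> \<epsilon> * sqrt (real m) / sqrt pi" if r: "r \<in> {1..m}" for r
  proof -
    define E where "E = {\<omega>\<in>space (init_measure d m eps_a). \<bar>preact0 \<omega> i r x\<bar> \<le> \<epsilon>}"
    have "PS.expectation (Ycnt \<epsilon> i x r) = PS.expectation (indicator E)"
      by (rule Bochner_Integration.integral_cong) (auto simp: Ycnt_def E_def)
    also have "\<dots> = measure (init_measure d m eps_a) E" by (simp add: E_def Int_absorb2)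
    also have "\<dots> \<le> \<epsilon> * sqrt (real m) / sqrt pi" unfolding E_def by (rule z_small[OF m e i r x eps])
    finally show ?thesis .
  qed
  have mu: "(\<Sum>r\<in>{1..m}. PS.expectation (Ycnt \<epsilon> i x r)) \<le> real m * (\<epsilon> * sqrt (real m) / sqrt pi)"
  proof -
    have "(\<Sum>r\<in>{1..m}. PS.expectation (Ycnt \<epsilon> i x r)) \<le> (\<Sum>r\<in>{1..m}. \<epsilon> * sqrt (real m) / sqrt pi)"
      by (rule sum_mono) (rule ex)
    then show ?thesis by simp
  qed
  have "measure (init_measure d m eps_a) {\<omega>\<in>space (init_measure d m eps_a).
      real m * (\<epsilon> * sqrt (real m) / sqrt pi) + s \<le> (\<Sum>r=1..m. Ycnt \<epsilon> i x r \<omega>)}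
     \<le> measure (init_measure d m eps_a) {\<omega>\<in>space (init_measure d m eps_a).
      (\<Sum>r\<in>{1..m}. Ycnt \<epsilon> i x r \<omega>) \<ge> (\<Sum>r\<in>{1..m}. PS.expectation (Ycnt \<epsilon> i x r)) + s}"
    by (rule PS.finite_measure_mono) (use mu in auto)
  also have "\<dots> \<le> exp (-2 * s\<^sup>2 / (\<Sum>r\<in>{1..m}. (1 - 0)\<^sup>2))"
    by (rule H.Hoeffding_ineq_ge[OF s]) (use m in simp)
  also have "(\<Sum>r\<in>{1..m}. (1 - 0::real)\<^sup>2) = real m" by simp
  finally show ?thesis by simp
qed

lemma a_tail:
  assumes m: "m \<ge> 1" and e: "eps_a > 0" and i: "i \<in> {1..d}" and L: "L \<ge> 0"
  shows "measure (init_measure d m eps_a) {\<omega>\<in>space (init_measure d m eps_a). \<exists>r\<in>{1..m}. L < \<bar>\<omega> (A i r)\<bar>}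
     \<le> real m * (sqrt 2 * exp (- L\<^sup>2 / (4 * eps_a\<^sup>2)))"
proof -
  interpret PS: prob_space "init_measure d m eps_a" using ps_init m e by blast
  have "{\<omega>\<in>space (init_measure d m eps_a). \<exists>r\<in>{1..m}. L < \<bar>\<omega> (A i r)\<bar>}
     = (\<Union>r\<in>{1..m}. {\<omega>\<in>space (init_measure d m eps_a). L < \<bar>\<omega> (A i r)\<bar>})" by auto
  also have "measure (init_measure d m eps_a) \<dots> \<le> (\<Sum>r\<in>{1..m}. measure (init_measure d m eps_a) {\<omega>\<in>space (init_measure d m eps_a). L < \<bar>\<omega> (A i r)\<bar>})"
    by (rule PS.finite_measure_subadditive_finite) auto
  also have "\<dots> \<le> (\<Sum>r\<in>{1..m}. sqrt 2 * exp (- L\<^sup>2 / (4 * eps_a\<^sup>2)))"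
  proof (rule sum_mono)
    fix r assume r: "r \<in> {1..m}"
    have "A i r \<in> init_index d m" using i r unfolding init_index_def by auto
    moreover have "init_sd m eps_a (A i r) = eps_a" by (simp add: init_sd_def)
    ultimately have D: "distributed (init_measure d m eps_a) lborel (\<lambda>\<omega>. \<omega> (A i r)) (normal_density 0 eps_a)"
      using comp_dist[OF m e] by metis
    show "measure (init_measure d m eps_a) {\<omega>\<in>space (init_measure d m eps_a). L < \<bar>\<omega> (A i r)\<bar>}
        \<le> sqrt 2 * exp (- L\<^sup>2 / (4 * eps_a\<^sup>2))"
      by (rule PS.normal_tail[OF D e L])
  qed
  also have "\<dots> = real m * (sqrt 2 * exp (- L\<^sup>2 / (4 * eps_a\<^sup>2)))" by simp
  finally show ?thesis .
qed



lemma ln_ge_half: "(x::real) \<ge> 2 \<Longrightarrow> ln x \<ge> 1/2"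
proof -
  assume x: "x \<ge> 2"
  have "ln (1/2::real) \<le> 1/2 - 1" by (rule ln_le_minus_one) simp
  then have "ln (2::real) \<ge> 1/2" by (simp add: ln_div)
  moreover have "ln 2 \<le> ln x" using x by simp
  ultimately show ?thesis by linarith
qed

lemma tail_arith:
  fixes m c1 eps_a :: real
  assumes m: "m \<ge> 2" and c1: "c1 > 10" and e: "eps_a > 0"
  shows "m * (sqrt 2 * exp (- (6 * c1 * eps_a * sqrt (2 * ln m))\<^sup>2 / (4 * eps_a\<^sup>2))) \<le> 1 / c1"
proof -
  have lm: "ln m \<ge> 1/2" using ln_ge_half m by blast
  have ex: "- (6 * c1 * eps_a * sqrt (2 * ln m))\<^sup>2 / (4 * eps_a\<^sup>2) = - (18 * c1\<^sup>2 * ln m)"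
    using lm e by (simp add: power_mult_distrib field_simps)
  have pos: "m * sqrt 2 * c1 > 0" using m c1 by simp
  have l1: "ln (sqrt 2) < sqrt 2" by (rule ln_less_self) simp
  have s2: "sqrt 2 \<le> 3/2"
    by (rule real_le_lsqrt) (auto simp: power2_eq_square)
  have l2: "ln c1 < c1" by (rule ln_less_self) (use c1 in simp)
  have "ln (m * sqrt 2 * c1) = ln m + ln (sqrt 2) + ln c1"
    using m c1 by (simp add: ln_mult)
  also have "\<dots> \<le> ln m + 2 * c1" using l1 l2 s2 c1 by linarith
  also have "\<dots> \<le> 18 * c1\<^sup>2 * ln m"
  proof -
    have "2 * c1 \<le> (18 * c1\<^sup>2 - 1) * (1/2)"
    proof -
      have "10 * c1 \<le> c1 * c1" using c1 by (intro mult_right_mono) auto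
      then have "4 * c1 \<le> 18 * (c1 * c1) - 1" using c1 by linarith
      then show ?thesis by (simp add: power2_eq_square)
    qed
    also have "\<dots> \<le> (18 * c1\<^sup>2 - 1) * ln m"
    proof -
      have "1 \<le> c1\<^sup>2" using c1 by (intro one_le_power) simp
      then show ?thesis using lm by (intro mult_left_mono) auto
    qed
    finally show ?thesis by (simp add: algebra_simps)
  qed
  finally have "m * sqrt 2 * c1 \<le> exp (18 * c1\<^sup>2 * ln m)"
    using pos by (metis exp_le_cancel_iff exp_ln)
  then have "m * sqrt 2 * c1 * exp (- (18 * c1\<^sup>2 * ln m)) \<le> 1"
    by (simp add: exp_minus field_simps)
  then show ?thesis unfolding ex using c1 by (simp add: field_simps)
qed

lemma main_arith:
  fixes m \<eta> t c1 c4 eps_a L :: real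
  assumes m: "m \<ge> 2" and eta: "\<eta> > 0" and t: "t \<ge> 0" and c1: "c1 > 0" and c4: "c4 \<ge> 1" and e: "eps_a > 0"
    and L: "L = 6 * c1 * eps_a * sqrt (2 * ln m)"
  shows "(9/2 * \<eta> * t) * L\<^sup>2 * (m * ((9/2 * \<eta> * t * L) * sqrt m / sqrt pi) + 4 * (c4 - 1) * m * sqrt m * \<eta> * t * L / sqrt pi)
     \<le> 192 * \<eta>\<^sup>2 * m powr 1.5 * L\<^sup>2 * c1 * c4 * eps_a * t\<^sup>2 * sqrt (ln m) / sqrt pi"
proof -
  define W where "W = \<eta>\<^sup>2 * t\<^sup>2 * m * sqrt m * L\<^sup>2 / sqrt pi"
  define q where "q = c1 * eps_a * sqrt (ln m)"
  have W0: "W \<ge> 0" unfolding W_def using m by simp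
  have q0: "q \<ge> 0" unfolding q_def using c1 e m by simp
  have Lq: "L = 6 * sqrt 2 * q" unfolding L q_def by (simp add: real_sqrt_mult)
  have p15: "m powr 1.5 = m * sqrt m"
  proof -
    have "m powr 1.5 = m powr (1 + 1/2)" by simp
    also have "\<dots> = m powr 1 * m powr (1/2)" by (rule powr_add)
    also have "\<dots> = m * sqrt m" using m by (simp add: powr_half_sqrt)
    finally show ?thesis .
  qed
  have lhs: "(9/2 * \<eta> * t) * L\<^sup>2 * (m * ((9/2 * \<eta> * t * L) * sqrt m / sqrt pi) + 4 * (c4 - 1) * m * sqrt m * \<eta> * t * L / sqrt pi)
     = W * (9/2 * L * (4 * c4 + 1/2))"
    unfolding W_def by (simp add: field_simps power2_eq_square)
  have rhs: "192 * \<eta>\<^sup>2 * m powr 1.5 * L\<^sup>2 * c1 * c4 * eps_a * t\<^sup>2 * sqrt (ln m) / sqrt pi = W * (192 * c4 * q)"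
    unfolding W_def q_def p15 by (simp add: field_simps)
  have s2: "sqrt 2 \<le> 3/2"
    by (rule real_le_lsqrt) (auto simp: power2_eq_square)
  have "9/2 * L * (4 * c4 + 1/2) = 27 * sqrt 2 * (4 * c4 + 1/2) * q" unfolding Lq by (simp add: algebra_simps)
  also have "\<dots> \<le> 27 * (3/2) * (4 * c4 + 1/2) * q"
    using s2 c4 q0 by (intro mult_right_mono) auto
  also have "\<dots> \<le> 192 * c4 * q"
    using c4 q0 by (intro mult_right_mono) auto
  finally have "9/2 * L * (4 * c4 + 1/2) \<le> 192 * c4 * q" .
  then show ?thesis unfolding lhs rhs using W0 by (rule mult_left_mono)
qed

lemma exp_arith:
  fixes m \<eta> t c4 L :: real
  assumes m: "m > 0"
  shows "exp (- 2 * (4 * (c4 - 1) * m * sqrt m * \<eta> * t * L / sqrt pi)\<^sup>2 / m)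
     = exp (- (32 * (c4 - 1)\<^sup>2 * \<eta>\<^sup>2 * m\<^sup>2 * L\<^sup>2 * t\<^sup>2 / pi))"
proof -
  have "(4 * (c4 - 1) * m * sqrt m * \<eta> * t * L / sqrt pi)\<^sup>2 = 16 * (c4 - 1)\<^sup>2 * m\<^sup>2 * m * \<eta>\<^sup>2 * t\<^sup>2 * L\<^sup>2 / pi"
  proof -
    have h: "(4 * c4 - 4)\<^sup>2 = 16 * (c4 - 1)\<^sup>2" by (simp add: power2_eq_square algebra_simps)
    show ?thesis using m by (simp add: power_mult_distrib power_divide h right_diff_distrib)
  qed
  then show ?thesis using m by (simp add: field_simps power2_eq_square)
qed



theorem lemma4:
  fixes d m Q :: nat and eps_a \<eta> c1 c4 :: real
    and xs :: "nat \<Rightarrow> nat \<Rightarrow> real" and x :: "nat \<Rightarrow> real" and i t :: nat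
  assumes "d \<ge> 1" and "m \<ge> 2" and "eps_a > 0" and "Q \<ge> 1" and "\<eta> > 0"
    and "\<forall>s. (\<Sum>k=1..d. (xs s k)\<^sup>2) \<le> 1"
    and "i \<in> {1..d}" and "(\<Sum>k=1..d. (x k)\<^sup>2) \<le> 1" and "t \<ge> 1"
    and "c1 > 10" and "c4 \<ge> 1"
  shows "let \<Lambda> = 6 * c1 * eps_a * sqrt (2 * ln (real m)) in
         measure (init_measure d m eps_a)
           {\<omega> \<in> space (init_measure d m eps_a).
              let Nv = netN m \<omega> i (sgd m Q \<eta> \<omega> i xs t) x;
                  Pv = netP m \<omega> i (sgd m Q \<eta> \<omega> i xs t) x in
              \<bar>phi Nv - phi Pv\<bar> \<le> \<bar>Nv - Pv\<bar> \<and>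
              \<bar>Nv - Pv\<bar> \<le> 192 * \<eta>\<^sup>2 * real m powr 1.5 * \<Lambda>\<^sup>2 * c1 * c4 * eps_a * (real t)\<^sup>2
                              * sqrt (ln (real m)) / sqrt pi}
         \<ge> 1 - 1 / c1 - exp (- (32 * (c4 - 1)\<^sup>2 * \<eta>\<^sup>2 * (real m)\<^sup>2 * \<Lambda>\<^sup>2 * (real t)\<^sup>2 / pi))"
proof -
  note asm = assms
  have m1: "m \<ge> 1" using asm(2) by simp
  have mr: "real m \<ge> 2" using asm(2) by simp
  have e: "eps_a > 0" by (rule asm(3))
  have i: "i \<in> {1..d}" by (rule asm(7))
  have x: "(\<Sum>l=1..d. (x l)\<^sup>2) \<le> 1" by (rule asm(8))
  have lnm: "ln (real m) > 0" using mr by simp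
  define L where "L = 6 * c1 * eps_a * sqrt (2 * ln (real m))"
  have L0: "L > 0" unfolding L_def using asm(10) e lnm by simp
  define M where "M = init_measure d m eps_a"
  interpret PS: prob_space M unfolding M_def using ps_init m1 e by blast
  define E where "E = 9/2 * \<eta> * real t"
  have E0: "E \<ge> 0" unfolding E_def using asm(5) by simp
  define \<epsilon> where "\<epsilon> = E * L"
  have eps0: "\<epsilon> \<ge> 0" unfolding \<epsilon>_def using E0 L0 by simp
  define s where "s = 4 * (c4 - 1) * real m * sqrt (real m) * \<eta> * real t * L / sqrt pi"
  have s0: "s \<ge> 0" unfolding s_def using asm(5,11) L0 by simp
  define Bound where "Bound = 192 * \<eta>\<^sup>2 * real m powr 1.5 * L\<^sup>2 * c1 * c4 * eps_a * (real t)\<^sup>2 * sqrt (ln (real m)) / sqrt pi"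
  define S where "S = {\<omega> \<in> space M. \<bar>phi (netN m \<omega> i (sgd m Q \<eta> \<omega> i xs t) x) - phi (netP m \<omega> i (sgd m Q \<eta> \<omega> i xs t) x)\<bar>
       \<le> \<bar>netN m \<omega> i (sgd m Q \<eta> \<omega> i xs t) x - netP m \<omega> i (sgd m Q \<eta> \<omega> i xs t) x\<bar> \<and>
       \<bar>netN m \<omega> i (sgd m Q \<eta> \<omega> i xs t) x - netP m \<omega> i (sgd m Q \<eta> \<omega> i xs t) x\<bar> \<le> Bound}"
  define B1 where "B1 = {\<omega>\<in>space M. \<exists>r\<in>{1..m}. L < \<bar>\<omega> (A i r)\<bar>}"
  define B2 where "B2 = {\<omega>\<in>space M. real m * (\<epsilon> * sqrt (real m) / sqrt pi) + s \<le> (\<Sum>r=1..m. Ycnt \<epsilon> i x r \<omega>)}"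
  have Nm[measurable]: "(\<lambda>\<omega>. netN m \<omega> i (sgd m Q \<eta> \<omega> i xs t) x) \<in> borel_measurable M"
    unfolding M_def by (rule NP_meas)
  have Pm[measurable]: "(\<lambda>\<omega>. netP m \<omega> i (sgd m Q \<eta> \<omega> i xs t) x) \<in> borel_measurable M"
    unfolding M_def by (rule NP_meas)
  define Nf where "Nf = (\<lambda>\<omega>. netN m \<omega> i (sgd m Q \<eta> \<omega> i xs t) x)"
  define Pf where "Pf = (\<lambda>\<omega>. netP m \<omega> i (sgd m Q \<eta> \<omega> i xs t) x)"
  have Nf[measurable]: "Nf \<in> borel_measurable M" unfolding Nf_def by (rule Nm)
  have Pf[measurable]: "Pf \<in> borel_measurable M" unfolding Pf_def by (rule Pm)
  have "{\<omega> \<in> space M. \<bar>phi (Nf \<omega>) - phi (Pf \<omega>)\<bar> \<le> \<bar>Nf \<omega> - Pf \<omega>\<bar> \<and> \<bar>Nf \<omega> - Pf \<omega>\<bar> \<le> Bound} \<in> sets M"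
    by (intro sets.sets_Collect_conj borel_measurable_le borel_measurable_abs borel_measurable_diff
        measurable_compose[OF Nf phi_meas] measurable_compose[OF Pf phi_meas] Nf Pf borel_measurable_const)
  then have Sm: "S \<in> sets M" unfolding S_def Nf_def Pf_def .
  have Ym[measurable]: "Ycnt \<epsilon> i x r \<in> borel_measurable M" for r unfolding M_def by (rule Ycnt_meas)
  have B1m: "B1 \<in> sets M" unfolding B1_def M_def by measurable
  have B2m: "B2 \<in> sets M" unfolding B2_def by measurable
  have PB1: "measure M B1 \<le> 1 / c1"
  proof -
    have "measure M B1 \<le> real m * (sqrt 2 * exp (- L\<^sup>2 / (4 * eps_a\<^sup>2)))"
      unfolding B1_def M_def by (rule a_tail[OF m1 e i]) (use L0 in simp)
    also have "\<dots> \<le> 1 / c1" unfolding L_def by (rule tail_arith[OF mr asm(10) e])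
    finally show ?thesis .
  qed
  have PB2: "measure M B2 \<le> exp (- (32 * (c4 - 1)\<^sup>2 * \<eta>\<^sup>2 * (real m)\<^sup>2 * L\<^sup>2 * (real t)\<^sup>2 / pi))"
  proof -
    have "measure M B2 \<le> exp (- 2 * s\<^sup>2 / real m)"
      unfolding B2_def M_def by (rule hoeff_bound[OF m1 e i x eps0 s0])
    also have "\<dots> = exp (- (32 * (c4 - 1)\<^sup>2 * \<eta>\<^sup>2 * (real m)\<^sup>2 * L\<^sup>2 * (real t)\<^sup>2 / pi))"
      unfolding s_def by (rule exp_arith) (use m1 in simp)
    finally show ?thesis .
  qed
  have sub: "space M - (B1 \<union> B2) \<subseteq> S"
  proof
    fix \<omega> assume w: "\<omega> \<in> space M - (B1 \<union> B2)"
    then have sp: "\<omega> \<in> space M" by blast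
    have aL: "\<forall>r\<in>{1..m}. \<bar>\<omega> (A i r)\<bar> \<le> L" using w unfolding B1_def by auto
    have cnt: "(\<Sum>r=1..m. Ycnt \<epsilon> i x r \<omega>) < real m * (\<epsilon> * sqrt (real m) / sqrt pi) + s"
      using w unfolding B2_def by auto
    have DE: "\<forall>r\<in>{1..m}. \<bar>preact \<omega> i (sgd m Q \<eta> \<omega> i xs t) r x - preact0 \<omega> i r x\<bar> \<le> E * \<bar>\<omega> (A i r)\<bar>"
    proof
      fix r assume "r \<in> {1..m}"
      show "\<bar>preact \<omega> i (sgd m Q \<eta> \<omega> i xs t) r x - preact0 \<omega> i r x\<bar> \<le> E * \<bar>\<omega> (A i r)\<bar>"
        unfolding preact_split E_def using sgd_D_bound[OF i asm(4) asm(6) x asm(5), of m \<omega> t r] by simp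
    qed
    have NP: "\<bar>netN m \<omega> i (sgd m Q \<eta> \<omega> i xs t) x - netP m \<omega> i (sgd m Q \<eta> \<omega> i xs t) x\<bar>
       \<le> E * L\<^sup>2 * (\<Sum>r=1..m. if \<bar>preact0 \<omega> i r x\<bar> \<le> E * L then 1 else 0)"
      by (rule NP_bound[OF aL DE E0])
    also have "(\<Sum>r=1..m. if \<bar>preact0 \<omega> i r x\<bar> \<le> E * L then 1 else 0) = (\<Sum>r=1..m. Ycnt \<epsilon> i x r \<omega>)"
      unfolding Ycnt_def \<epsilon>_def by simp
    also have "E * L\<^sup>2 * (\<Sum>r=1..m. Ycnt \<epsilon> i x r \<omega>) \<le> E * L\<^sup>2 * (real m * (\<epsilon> * sqrt (real m) / sqrt pi) + s)"
      using cnt E0 by (intro mult_left_mono) auto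
    also have "\<dots> \<le> Bound"
      unfolding Bound_def E_def \<epsilon>_def s_def
      using main_arith[OF mr asm(5) _ _ asm(11) e L_def, of "real t"] asm(10) by simp
    finally have "\<bar>netN m \<omega> i (sgd m Q \<eta> \<omega> i xs t) x - netP m \<omega> i (sgd m Q \<eta> \<omega> i xs t) x\<bar> \<le> Bound" .
    then show "\<omega> \<in> S" unfolding S_def using sp phi_lip by blast
  qed
  have "1 - 1 / c1 - exp (- (32 * (c4 - 1)\<^sup>2 * \<eta>\<^sup>2 * (real m)\<^sup>2 * L\<^sup>2 * (real t)\<^sup>2 / pi))
      \<le> 1 - measure M (B1 \<union> B2)"
  proof -
    have "measure M (B1 \<union> B2) \<le> measure M B1 + measure M B2"
      by (rule measure_subadditive[OF B1m B2m]) (simp_all add: PS.emeasure_eq_measure)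
    then show ?thesis using PB1 PB2 by linarith
  qed
  also have "1 - measure M (B1 \<union> B2) = measure M (space M - (B1 \<union> B2))"
    using PS.prob_compl[of "B1 \<union> B2"] B1m B2m by simp
  also have "\<dots> \<le> measure M S"
    by (rule PS.finite_measure_mono[OF sub Sm])
  finally have fin: "1 - 1 / c1 - exp (- (32 * (c4 - 1)\<^sup>2 * \<eta>\<^sup>2 * (real m)\<^sup>2 * L\<^sup>2 * (real t)\<^sup>2 / pi)) \<le> measure M S" .
  show ?thesis unfolding Let_def L_def[symmetric] M_def[symmetric]
    using fin unfolding S_def Bound_def .
qed


end
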